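(* Let $\alpha\ge1$, $\beta$ odd, and let ${\cal C}=\langle (b\mid 0),(\ell\mid fh+2f)\rangle\subseteq R_{\alpha,\beta}$ be a $\mathbb{Z}_2\mathbb{Z}_4$-additive cyclic code of length $\alpha+\beta$, where $f,h,g\in\mathbb{Z}_4[x]$ with $fhg=x^\beta-1$, $b\in\mathbb{Z}_2[x]$ divides $x^\alpha-1$, and $\ell\in\mathbb{Z}_2[x]/(x^\alpha-1)$. If $g=1$ or $g=x^s-1$ for some positive divisor $s$ of $\beta$, then $\Phi({\cal C})$ is a linear binary code.
   Context: $R_{\alpha,\beta}=\mathbb{Z}_2[x]/(x^\alpha-1)\times\mathbb{Z}_4[x]/(x^\beta-1)$, identified with $\mathbb{Z}_2^\alpha\times\mathbb{Z}_4^\beta$ via coefficient vectors; it is a $\mathbb{Z}_4[x]$-module via $p\star(b\mid a)=(\tilde pb\mid pa)$, $\tilde p$ the reduction of $p$ mod 2. A $\mathbb{Z}_2\mathbb{Z}_4$-additive cyclic code is a $\mathbb{Z}_4[x]$-submodule; $\langle\cdot\rangle$ is the generated submodule. Gray map: for $u'\in\mathbb{Z}_4^n$ with $u'_i=\tilde u'_i+2\hat u'_i$, $\tilde u'_i,\hat u'_i\in\{0,1\}$, $\phi(u')=(\hat u'_0,\dots,\hat u'_{n-1},\tilde u'_0+\hat u'_0,\dots,\tilde u'_{n-1}+\hat u'_{n-1})$, and $\Phi(u\mid u')=(u\mid\phi(u'))\in\mathbb{Z}_2^{\alpha+2\beta}$. Linear means a $\mathbb{Z}_2$-subspace. *)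

theory Defs
  imports "HOL-Computational_Algebra.Polynomial" "HOL-Library.Z2" "HOL-Library.Numeral_Type"
begin

(* Z_2 is the type bit, Z_4 is the numeral type 4.
   Integer representative in {0,1,2,3} of an element of Z_4: *)
definition z4_int :: "4 \<Rightarrow> int" where
  "z4_int u = Rep_bit0 u"

definition red2 :: "4 \<Rightarrow> bit" where
  "red2 u = of_int (z4_int u)"

(* cyclic reduction of a polynomial modulo x^n - 1 (canonical representative of degree < n) *)
definition cyc :: "nat \<Rightarrow> 'a::comm_ring_1 poly \<Rightarrow> 'a poly" where
  "cyc n p = (\<Sum>i<n. monom (\<Sum>j\<in>{j. j \<le> degree p \<and> j mod n = i}. coeff p j) i)"

definition R_elems :: "nat \<Rightarrow> nat \<Rightarrow> (bit poly \<times> 4 poly) set" where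
  "R_elems \<alpha> \<beta> = {(b, a). cyc \<alpha> b = b \<and> cyc \<beta> a = a}"

definition radd :: "nat \<Rightarrow> nat \<Rightarrow> bit poly \<times> 4 poly \<Rightarrow> bit poly \<times> 4 poly \<Rightarrow> bit poly \<times> 4 poly" where
  "radd \<alpha> \<beta> u v = (cyc \<alpha> (fst u + fst v), cyc \<beta> (snd u + snd v))"

definition smul_R :: "nat \<Rightarrow> nat \<Rightarrow> 4 poly \<Rightarrow> bit poly \<times> 4 poly \<Rightarrow> bit poly \<times> 4 poly" where
  "smul_R \<alpha> \<beta> p u = (cyc \<alpha> (map_poly red2 p * fst u), cyc \<beta> (p * snd u))"

definition is_Z2Z4_cyclic_code :: "nat \<Rightarrow> nat \<Rightarrow> (bit poly \<times> 4 poly) set \<Rightarrow> bool" where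
  "is_Z2Z4_cyclic_code \<alpha> \<beta> C \<longleftrightarrow>
     C \<subseteq> R_elems \<alpha> \<beta> \<and> (0, 0) \<in> C \<and>
     (\<forall>u\<in>C. \<forall>v\<in>C. radd \<alpha> \<beta> u v \<in> C) \<and>
     (\<forall>p. \<forall>u\<in>C. smul_R \<alpha> \<beta> p u \<in> C)"

definition gen_code :: "nat \<Rightarrow> nat \<Rightarrow> (bit poly \<times> 4 poly) set \<Rightarrow> (bit poly \<times> 4 poly) set" where
  "gen_code \<alpha> \<beta> S = \<Inter>{C. is_Z2Z4_cyclic_code \<alpha> \<beta> C \<and> S \<subseteq> C}"

(* Gray map phi on the Z_4 part, via u_i = u~_i + 2 u^_i *)
definition tilde4 :: "4 \<Rightarrow> bit" where "tilde4 u = of_int (z4_int u mod 2)"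
definition hat4 :: "4 \<Rightarrow> bit" where "hat4 u = of_int (z4_int u div 2)"

(* Phi (b | a) in Z_2^(alpha + 2 beta), as a function on indices 0..alpha+2beta-1 (zero beyond) *)
definition Phi :: "nat \<Rightarrow> nat \<Rightarrow> bit poly \<times> 4 poly \<Rightarrow> (nat \<Rightarrow> bit)" where
  "Phi \<alpha> \<beta> u = (\<lambda>i.
     if i < \<alpha> then coeff (fst u) i
     else if i < \<alpha> + \<beta> then hat4 (coeff (snd u) (i - \<alpha>))
     else if i < \<alpha> + 2 * \<beta> then
        tilde4 (coeff (snd u) (i - \<alpha> - \<beta>)) + hat4 (coeff (snd u) (i - \<alpha> - \<beta>))
     else 0)"

(* linear binary code: Z_2-subspace (scalars are 0,1, so closure under 0 and addition) *)
definition binary_linear :: "(nat \<Rightarrow> bit) set \<Rightarrow> bool" where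
  "binary_linear S \<longleftrightarrow> (\<lambda>_. 0) \<in> S \<and> (\<forall>x\<in>S. \<forall>y\<in>S. (\<lambda>i. x i + y i) \<in> S)"

end

theory Submission imports Defs begin
lemma z4_cases: "(x::4) = 0 \<or> x = 1 \<or> x = 2 \<or> x = 3"
proof (cases x)
  case (of_int z)
  then have "z = 0 \<or> z = 1 \<or> z = 2 \<or> z = 3" by auto
  then show ?thesis using of_int by auto
qed
lemma z4v: "z4_int 0 = 0" "z4_int 1 = 1" "z4_int 2 = 2" "z4_int 3 = 3"
  by (simp_all add: z4_int_def bit0.Rep_numeral bit0.Rep_0 bit0.Rep_1)
lemma z4num: "z4_int (numeral w) = numeral w mod 4"
  by (simp add: z4_int_def bit0.Rep_numeral)
lemma redv: "red2 0 = 0" "red2 1 = 1" "red2 2 = 0" "red2 3 = 1"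
  "tilde4 0 = 0" "tilde4 1 = 1" "tilde4 2 = 0" "tilde4 3 = 1"
  "hat4 0 = 0" "hat4 1 = 0" "hat4 2 = 1" "hat4 3 = 1"
  by (simp_all add: red2_def tilde4_def hat4_def z4v)
lemma red2_add: "red2 (x + y) = red2 x + red2 y"
  using z4_cases[of x] z4_cases[of y] by (auto simp: redv red2_def tilde4_def hat4_def z4num z4v)
lemma red2_mult: "red2 (x * y) = red2 x * red2 y"
  using z4_cases[of x] z4_cases[of y] by (auto simp: redv red2_def tilde4_def hat4_def z4num z4v)
lemma tilde_red: "tilde4 x = red2 x"
  using z4_cases[of x] by (auto simp: redv red2_def tilde4_def hat4_def z4num z4v)
lemma gray: "hat4 (x + y + 2 * (if tilde4 x = 1 \<and> tilde4 y = 1 then 1 else 0)) = hat4 x + hat4 y"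
  "tilde4 (x + y + 2 * (if tilde4 x = 1 \<and> tilde4 y = 1 then 1 else 0)) = tilde4 x + tilde4 y"
  using z4_cases[of x] z4_cases[of y] by (auto simp: redv red2_def tilde4_def hat4_def z4num z4v)

lemma swap4: "(a::bit) + c + (b + d) = (a + b) + (c + d)"
  by (metis add.assoc add.left_commute)

lemma four0: "(4::4) = 0" by simp

lemma red2_0[simp]: "red2 0 = 0" by (simp add: redv)
lemma red2_diff: "red2 (x - y) = red2 x - red2 y"
  by (metis red2_add diff_add_cancel add_diff_cancel)

lemma coeff_mult_monom': "coeff (p * monom c n) k = (if k < n then 0 else c * coeff p (k - n))"
  by (metis mult.commute coeff_monom_mult)

lemma red2_sum: "red2 (sum g A) = (\<Sum>x\<in>A. red2 (g x))"
  by (induction A rule: infinite_finite_induct) (auto simp: red2_add)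

abbreviation M :: "4 poly \<Rightarrow> bit poly" where "M \<equiv> map_poly red2"

lemma coeff_M: "coeff (M p) i = red2 (coeff p i)"
  by (simp add: coeff_map_poly)
lemma M_add: "M (p + q) = M p + M q"
  by (rule poly_eqI) (simp add: coeff_M red2_add)
lemma M_diff: "M (p - q) = M p - M q"
  by (rule poly_eqI) (simp add: coeff_M red2_diff)
lemma M_mult: "M (p * q) = M p * M q"
  by (rule poly_eqI) (simp add: coeff_M coeff_mult red2_sum red2_mult)
lemma M_monom: "M (monom c n) = monom (red2 c) n"
  by (simp add: map_poly_monom)
lemma M_1: "M 1 = 1" by (simp add: redv)
lemma M_2: "M [:2:] = 0"
  by (rule poly_eqI) (simp add: coeff_M redv coeff_pCons split: nat.splits)

lemma M_smult2: "M (smult 2 p) = 0"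
  by (rule poly_eqI) (simp add: coeff_M red2_mult redv)

lemma cyc_0[simp]: "cyc n 0 = 0" by (simp add: cyc_def)

lemma cyc_coeff: "coeff (cyc n p) i = (if i < n then (\<Sum>j\<in>{j. j \<le> degree p \<and> j mod n = i}. coeff p j) else 0)"
  unfolding cyc_def coeff_sum by (simp add: coeff_monom)

lemma cyc_high: "i \<ge> n \<Longrightarrow> coeff (cyc n p) i = 0"
  by (simp add: cyc_coeff)

lemma cyc_alt:
  assumes "n > 0"
  shows "cyc n p = (\<Sum>j\<le>degree p. monom (coeff p j) (j mod n))"
proof (rule poly_eqI)
  fix i
  have "coeff (\<Sum>j\<le>degree p. monom (coeff p j) (j mod n)) i
      = (\<Sum>j\<le>degree p. if j mod n = i then coeff p j else 0)"
    by (simp add: coeff_sum coeff_monom)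
  also have "\<dots> = (\<Sum>j\<in>{j \<in> {..degree p}. j mod n = i}. coeff p j)"
    by (rule sum.inter_filter[symmetric]) simp
  finally have 1: "coeff (\<Sum>j\<le>degree p. monom (coeff p j) (j mod n)) i
      = (\<Sum>j\<in>{j \<in> {..degree p}. j mod n = i}. coeff p j)" .
  show "coeff (cyc n p) i = coeff (\<Sum>j\<le>degree p. monom (coeff p j) (j mod n)) i"
  proof (cases "i < n")
    case True
    then show ?thesis unfolding 1 cyc_coeff by (simp add: atMost_def)
  next
    case False
    have "\<forall>j. j mod n < n" using assms by simp
    then have "{j \<in> {..degree p}. j mod n = i} = {}" "{j. j \<le> degree p \<and> j mod n = i} = {}"
      using False by auto
    then show ?thesis unfolding 1 using False by (simp only: cyc_coeff if_False sum.empty)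
  qed
qed

lemma pow_minus_one_dvd: "(x - 1) dvd (x ^ k - (1::'a::comm_ring_1))"
proof (induction k)
  case 0 then show ?case by simp
next
  case (Suc k)
  have "x ^ Suc k - 1 = x * (x ^ k - 1) + (x - 1)" by (simp add: algebra_simps)
  then show ?case unfolding \<open>x ^ Suc k - 1 = x * (x ^ k - 1) + (x - 1)\<close>
    using Suc by (intro dvd_add dvd_mult) auto
qed

lemma cyc_dvd:
  fixes p :: "'a::comm_ring_1 poly"
  assumes "n > 0"
  shows "(monom 1 n - 1) dvd (cyc n p - p)"
proof -
  have "cyc n p - p = (\<Sum>j\<le>degree p. monom (coeff p j) (j mod n) - monom (coeff p j) j)"
    using cyc_alt[OF assms, of p] poly_as_sum_of_monoms[of p]
    by (simp add: sum_subtractf)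
  also have "(monom 1 n - 1) dvd \<dots>"
  proof (rule dvd_sum)
    fix j
    have e: "monom (coeff p j) j = monom (coeff p j) (j mod n) * (monom 1 n) ^ (j div n)"
      by (simp add: monom_power mult_monom mult.commute)
    have "(monom (1::'a) n - 1) dvd ((monom 1 n) ^ (j div n) - 1)" by (rule pow_minus_one_dvd)
    then have "(monom (1::'a) n - 1) dvd (monom (coeff p j) (j mod n) * (1 - (monom 1 n) ^ (j div n)))"
      by (metis dvd_minus_iff dvd_mult minus_diff_eq)
    then show "(monom 1 n - 1) dvd (monom (coeff p j) (j mod n) - monom (coeff p j) j)"
      unfolding e by (simp add: algebra_simps)
  qed
  finally show ?thesis .
qed

lemma dvd_small_zero:
  fixes d :: "'a::comm_ring_1 poly"
  assumes "n > 0" "(monom 1 n - 1) dvd d" "\<forall>i\<ge>n. coeff d i = 0"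
  shows "d = 0"
proof (rule ccontr)
  assume "d \<noteq> 0"
  obtain k where k: "d = (monom 1 n - 1) * k" using assms(2) by blast
  with \<open>d \<noteq> 0\<close> have "k \<noteq> 0" by auto
  have "coeff d (degree k + n) = coeff k (degree k) - coeff k (degree k + n)"
    unfolding k by (simp add: algebra_simps coeff_monom_mult coeff_mult_monom')
  also have "coeff k (degree k + n) = 0" using assms(1) by (intro coeff_eq_0) simp
  finally have "coeff d (degree k + n) \<noteq> 0" using \<open>k \<noteq> 0\<close> by simp
  with assms(3) show False by auto
qed

lemma monic_cancel:
  fixes d :: "'a::comm_ring_1 poly"
  assumes "n > 0" "(monom 1 n - 1) * d = 0"
  shows "d = 0"
proof (rule ccontr)
  assume "d \<noteq> 0"
  have "coeff ((monom 1 n - 1) * d) (degree d + n) = coeff d (degree d) - coeff d (degree d + n)"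
    by (simp add: algebra_simps coeff_monom_mult coeff_mult_monom')
  also have "coeff d (degree d + n) = 0" using assms(1) by (intro coeff_eq_0) simp
  finally show False using \<open>d \<noteq> 0\<close> assms(2) by simp
qed

lemma cyc_unique:
  fixes p r :: "'a::comm_ring_1 poly"
  assumes "n > 0" "\<forall>i\<ge>n. coeff r i = 0" "(monom 1 n - 1) dvd (r - p)"
  shows "cyc n p = r"
proof -
  have "(monom 1 n - 1) dvd ((cyc n p - p) - (r - p))"
    using cyc_dvd[OF assms(1), of p] assms(3) by (rule dvd_diff)
  then have "(monom 1 n - 1) dvd (cyc n p - r)" by simp
  moreover have "\<forall>i\<ge>n. coeff (cyc n p - r) i = 0" using assms(2) by (simp add: cyc_high)
  ultimately show ?thesis using dvd_small_zero[OF assms(1)] by fastforce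
qed

lemma cyc_id: "n > 0 \<Longrightarrow> \<forall>i\<ge>n. coeff p i = 0 \<Longrightarrow> cyc n p = p"
  by (rule cyc_unique) auto

lemma cyc_eqI:
  fixes p q :: "'a::comm_ring_1 poly"
  assumes "n > 0" "(monom 1 n - 1) dvd (p - q)"
  shows "cyc n p = cyc n q"
proof (rule cyc_unique[OF assms(1)])
  show "\<forall>i\<ge>n. coeff (cyc n q) i = 0" by (simp add: cyc_high)
  have "(monom 1 n - 1) dvd ((cyc n q - q) - (p - q))"
    using cyc_dvd[OF assms(1), of q] assms(2) by (rule dvd_diff)
  then show "(monom 1 n - 1) dvd (cyc n q - p)" by simp
qed

lemma cyc_cyc: "n > 0 \<Longrightarrow> cyc n (cyc n p) = cyc n p"
  by (rule cyc_id) (auto simp: cyc_high)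

lemma cyc_add:
  fixes x y :: "'a::comm_ring_1 poly"
  assumes "n > 0" shows "cyc n (cyc n x + cyc n y) = cyc n (x + y)"
proof (rule cyc_eqI[OF assms])
  have "(monom 1 n - 1) dvd ((cyc n x - x) + (cyc n y - y))"
    using cyc_dvd[OF assms] by (intro dvd_add)
  then show "(monom 1 n - 1) dvd (cyc n x + cyc n y - (x + y))" by (simp add: algebra_simps)
qed

lemma cyc_mult:
  fixes p q :: "'a::comm_ring_1 poly"
  assumes "n > 0" shows "cyc n (p * cyc n q) = cyc n (p * q)"
proof (rule cyc_eqI[OF assms])
  have "(monom 1 n - 1) dvd (p * (cyc n q - q))"
    using cyc_dvd[OF assms] by (intro dvd_mult)
  then show "(monom 1 n - 1) dvd (p * cyc n q - p * q)" by (simp add: algebra_simps)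
qed

lemma M_cyc: assumes "n > 0" shows "M (cyc n p) = cyc n (M p)"
proof (rule sym, rule cyc_unique[OF assms])
  show "\<forall>i\<ge>n. coeff (M (cyc n p)) i = 0" by (simp add: coeff_M cyc_high)
  obtain k where "cyc n p - p = (monom 1 n - 1) * k" using cyc_dvd[OF assms, of p] by blast
  then have "M (cyc n p) - M p = (monom 1 n - 1) * M k"
    by (metis M_diff M_mult M_monom M_1 redv(2))
  then show "(monom 1 n - 1) dvd (M (cyc n p) - M p)" by simp
qed

definition pp :: "nat \<Rightarrow> nat \<Rightarrow> 'a::comm_ring_1 poly" where
  "pp s m = (\<Sum>k<m. monom 1 (s * k))"

lemma pp_tele: "(monom 1 s - 1) * (pp s m :: 'a::comm_ring_1 poly) = monom 1 (s * m) - 1"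
proof (induction m)
  case 0 then show ?case by (simp add: pp_def)
next
  case (Suc m)
  have "(monom 1 s - 1) * (pp s (Suc m) :: 'a poly) = (monom 1 s - 1) * pp s m + (monom 1 s - 1) * monom 1 (s * m)"
    by (simp add: pp_def algebra_simps)
  also have "(monom 1 s - 1) * monom 1 (s * m) = monom 1 (s * Suc m) - (monom (1::'a) (s * m))"
    by (simp add: algebra_simps mult_monom)
  finally show ?case using Suc by simp
qed

lemma pp_coeff:
  fixes r :: "'a::comm_ring_1 poly"
  assumes "s > 0" "\<forall>i\<ge>s. coeff r i = 0"
  shows "coeff (r * pp s m) j = (if j < s * m then coeff r (j mod s) else 0)"
proof (induction m)
  case 0 then show ?case by (simp add: pp_def)
next
  case (Suc m)
  have "coeff (r * pp s (Suc m)) j = coeff (r * pp s m) j + coeff (r * monom 1 (s * m)) j"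
    by (simp add: pp_def algebra_simps)
  also have "\<dots> = (if j < s * m then coeff r (j mod s) else 0) +
      (if j < s * m then 0 else coeff r (j - s * m))"
    using Suc by (simp add: coeff_mult_monom')
  also have "\<dots> = (if j < s * Suc m then coeff r (j mod s) else 0)"
  proof (cases "j < s * m")
    case True
    then show ?thesis by simp
  next
    case False
    then obtain d where d: "j = s * m + d" by (metis le_Suc_ex not_less)
    show ?thesis
    proof (cases "d < s")
      case True
      then have "j mod s = d" unfolding d by simp
      then show ?thesis using False True d by simp
    next
      case False
      then show ?thesis using assms(2) d by simp
    qed
  qed
  finally show ?case .
qed

lemma M_pp: "M (pp s m) = pp s m"
  by (induction m) (simp_all add: pp_def M_add M_monom redv)

lemma R_code: assumes "\<alpha> > 0" "\<beta> > 0" shows "is_Z2Z4_cyclic_code \<alpha> \<beta> (R_elems \<alpha> \<beta>)"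
  using assms by (auto simp: is_Z2Z4_cyclic_code_def R_elems_def radd_def smul_R_def cyc_cyc)

lemma gen_code_code:
  assumes "\<alpha> > 0" "\<beta> > 0" "S \<subseteq> R_elems \<alpha> \<beta>"
  shows "is_Z2Z4_cyclic_code \<alpha> \<beta> (gen_code \<alpha> \<beta> S)"
proof -
  have R: "R_elems \<alpha> \<beta> \<in> {C. is_Z2Z4_cyclic_code \<alpha> \<beta> C \<and> S \<subseteq> C}"
    using R_code[OF assms(1,2)] assms(3) by simp
  let ?F = "{C. is_Z2Z4_cyclic_code \<alpha> \<beta> C \<and> S \<subseteq> C}"
  have G: "gen_code \<alpha> \<beta> S = \<Inter> ?F" by (simp add: gen_code_def)
  have "\<Inter> ?F \<subseteq> R_elems \<alpha> \<beta>" using R by blast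
  moreover have "(0,0) \<in> \<Inter> ?F" by (auto simp: is_Z2Z4_cyclic_code_def)
  moreover have "\<forall>u\<in>\<Inter> ?F. \<forall>v\<in>\<Inter> ?F. radd \<alpha> \<beta> u v \<in> \<Inter> ?F"
    by (auto simp: is_Z2Z4_cyclic_code_def)
  moreover have "\<forall>p. \<forall>u\<in>\<Inter> ?F. smul_R \<alpha> \<beta> p u \<in> \<Inter> ?F"
    by (auto simp: is_Z2Z4_cyclic_code_def)
  ultimately show ?thesis unfolding G is_Z2Z4_cyclic_code_def[of _ _ "\<Inter> ?F"] by blast
qed

lemma gen_code_sub: "S \<subseteq> gen_code \<alpha> \<beta> S"
  by (auto simp: gen_code_def)

lemma gen_code_least: "is_Z2Z4_cyclic_code \<alpha> \<beta> C \<Longrightarrow> S \<subseteq> C \<Longrightarrow> gen_code \<alpha> \<beta> S \<subseteq> C"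
  by (auto simp: gen_code_def)


lemma R_high:
  assumes "u \<in> R_elems \<alpha> \<beta>"
  shows "\<forall>i\<ge>\<alpha>. coeff (fst u) i = 0" "\<forall>i\<ge>\<beta>. coeff (snd u) i = 0"
proof -
  obtain b a where u: "u = (b, a)" "cyc \<alpha> b = b" "cyc \<beta> a = a"
    using assms by (auto simp: R_elems_def)
  show "\<forall>i\<ge>\<alpha>. coeff (fst u) i = 0" using cyc_high[of \<alpha> _ b] u by simp
  show "\<forall>i\<ge>\<beta>. coeff (snd u) i = 0" using cyc_high[of \<beta> _ a] u by simp
qed

theorem mainTheorem7:
  fixes \<alpha> \<beta> :: nat and f h g :: "4 poly" and b l :: "bit poly"
  assumes "\<alpha> \<ge> 1" and "odd \<beta>"
    and "f * h * g = monom 1 \<beta> - 1"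
    and "b dvd (monom 1 \<alpha> - 1)"
    and "g = 1 \<or> (\<exists>s>0. s dvd \<beta> \<and> g = monom 1 s - 1)"
  shows "binary_linear (Phi \<alpha> \<beta> ` gen_code \<alpha> \<beta>
           {(cyc \<alpha> b, 0), (cyc \<alpha> l, cyc \<beta> (f * h + 2 * f))})"
proof -
  have a0: "\<alpha> > 0" using assms(1) by simp
  have b0: "\<beta> > 0" using assms(2) by (cases \<beta>) auto
  define X where "X = f * h + 2 * f"
  define S where "S = {(cyc \<alpha> b, 0), (cyc \<alpha> l, cyc \<beta> X)}"
  define C where "C = gen_code \<alpha> \<beta> S"
  have SR: "S \<subseteq> R_elems \<alpha> \<beta>" by (auto simp: S_def R_elems_def cyc_cyc a0 b0)
  have Ccode: "is_Z2Z4_cyclic_code \<alpha> \<beta> C" unfolding C_def by (rule gen_code_code[OF a0 b0 SR])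
  have SC: "S \<subseteq> C" unfolding C_def by (rule gen_code_sub)
  define F where "F = M (f * h)"
  define I where "I = {u \<in> R_elems \<alpha> \<beta>. \<exists>c. M (snd u) = cyc \<beta> (c * F)}"
  have Icode: "is_Z2Z4_cyclic_code \<alpha> \<beta> I"
    unfolding is_Z2Z4_cyclic_code_def
  proof (intro conjI ballI allI)
    show "I \<subseteq> R_elems \<alpha> \<beta>" by (auto simp: I_def)
    show "(0, 0) \<in> I" unfolding I_def R_elems_def by (auto intro: exI[of _ 0])
  next
    fix u v assume "u \<in> I" "v \<in> I"
    then obtain c1 c2 where u: "u \<in> R_elems \<alpha> \<beta>" "M (snd u) = cyc \<beta> (c1 * F)"
      and v: "v \<in> R_elems \<alpha> \<beta>" "M (snd v) = cyc \<beta> (c2 * F)" by (auto simp: I_def)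
    have "M (snd (radd \<alpha> \<beta> u v)) = cyc \<beta> ((c1 + c2) * F)"
      by (simp add: radd_def M_cyc[OF b0] M_add u v cyc_add[OF b0] algebra_simps)
    moreover have "radd \<alpha> \<beta> u v \<in> R_elems \<alpha> \<beta>"
      using a0 b0 by (simp add: radd_def R_elems_def cyc_cyc)
    ultimately show "radd \<alpha> \<beta> u v \<in> I" by (auto simp: I_def)
  next
    fix p u assume "u \<in> I"
    then obtain c where u: "u \<in> R_elems \<alpha> \<beta>" "M (snd u) = cyc \<beta> (c * F)" by (auto simp: I_def)
    have "M (snd (smul_R \<alpha> \<beta> p u)) = cyc \<beta> ((M p * c) * F)"
      by (simp add: smul_R_def M_cyc[OF b0] M_mult u cyc_mult[OF b0] algebra_simps)
    moreover have "smul_R \<alpha> \<beta> p u \<in> R_elems \<alpha> \<beta>"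
      using a0 b0 by (simp add: smul_R_def R_elems_def cyc_cyc)
    ultimately show "smul_R \<alpha> \<beta> p u \<in> I" by (auto simp: I_def)
  qed
  have MX: "M X = F"
    by (simp add: X_def F_def M_add M_mult numeral_poly M_2 M_smult2)
  have SI: "S \<subseteq> I"
  proof
    fix u assume "u \<in> S"
    moreover have "(cyc \<alpha> b, 0) \<in> I" using SR unfolding I_def S_def by (auto intro: exI[of _ 0])
    moreover have "M (cyc \<beta> X) = cyc \<beta> (1 * F)" by (simp add: M_cyc[OF b0] MX)
    then have "(cyc \<alpha> l, cyc \<beta> X) \<in> I" using SR unfolding I_def S_def by (auto intro!: exI[of _ 1])
    ultimately show "u \<in> I" unfolding S_def by auto
  qed
  have CI: "C \<subseteq> I" unfolding C_def by (rule gen_code_least[OF Icode SI])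
  have CR: "C \<subseteq> R_elems \<alpha> \<beta>" using CI by (auto simp: I_def)
  define tt where "tt u v j = (if tilde4 (coeff (snd u) j) = 1 \<and> tilde4 (coeff (snd v) j) = 1 then 1 else (0::4))"
    for u v :: "bit poly \<times> 4 poly" and j
  define TT where "TT u v = (\<Sum>j<\<beta>. monom (tt u v j) j)" for u v
  have coeff_TT: "coeff (TT u v) j = (if j < \<beta> then tt u v j else 0)" for u v j
    by (simp add: TT_def coeff_sum coeff_monom)
  have key: "(0, cyc \<beta> ([:2:] * TT u v)) \<in> C" if uC: "u \<in> C" and vC: "v \<in> C" for u v
  proof -
    have Ci: "\<And>w. w \<in> C \<Longrightarrow> \<exists>c. M (snd w) = cyc \<beta> (c * F)" using CI by (auto simp: I_def)
    have Cz: "(0,0) \<in> C" using Ccode by (simp add: is_Z2Z4_cyclic_code_def)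
    from assms(5) show ?thesis
    proof
      assume g1: "g = 1"
      then have FQ: "F = monom 1 \<beta> - 1" using assms(3) by (simp add: F_def M_diff M_monom redv)
      have z: "tilde4 (coeff (snd w) j) = 0" if wC: "w \<in> C" for w j
      proof -
        obtain c where "M (snd w) = cyc \<beta> (c * F)" using Ci wC by blast
        also have "cyc \<beta> (c * F) = cyc \<beta> 0" by (rule cyc_eqI[OF b0]) (simp add: FQ)
        finally have "M (snd w) = 0" by simp
        then show ?thesis by (metis coeff_M coeff_0 tilde_red)
      qed
      have "TT u v = 0" using z[OF uC] by (simp add: TT_def tt_def)
      then show ?thesis using Cz by simp
    next
      assume "\<exists>s>0. s dvd \<beta> \<and> g = monom 1 s - 1"
      then obtain s where s: "s > 0" "s dvd \<beta>" "g = monom 1 s - 1" by blast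
      define m where "m = \<beta> div s"
      have bsm: "\<beta> = s * m" using s(2) by (simp add: m_def)
      have sle: "s \<le> \<beta>" using s(2) b0 by (simp add: dvd_imp_le)
      have fhp: "f * h = pp s m"
      proof -
        have e1: "(monom 1 s - 1) * (f * h) = monom 1 \<beta> - 1" using assms(3) s(3)
          by (simp add: mult.commute)
        have e2: "(monom 1 s - 1) * (pp s m :: 4 poly) = monom 1 \<beta> - 1" using pp_tele[of s m] bsm by simp
        have "(monom 1 s - 1) * (f * h - pp s m) = 0"
          by (simp only: right_diff_distrib e1 e2) simp
        then have "f * h - pp s m = 0" by (rule monic_cancel[OF s(1)])
        then show ?thesis by simp
      qed
      have Fp: "F = pp s m" by (simp add: F_def fhp M_pp)
      have per: "\<exists>c'. \<forall>j<\<beta>. tilde4 (coeff (snd w) j) = coeff c' (j mod s)" if wC: "w \<in> C" for w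
      proof -
        obtain c where c: "M (snd w) = cyc \<beta> (c * F)" using Ci wC by blast
        define c' where "c' = cyc s c"
        have hc': "\<forall>i\<ge>s. coeff c' i = 0" by (simp add: c'_def cyc_high)
        obtain k where k: "c' - c = (monom 1 s - 1) * k" using cyc_dvd[OF s(1), of c] unfolding c'_def by blast
        have "cyc \<beta> (c * F) = cyc \<beta> (c' * F)"
        proof (rule cyc_eqI[OF b0])
          have "c * F - c' * F = - ((c' - c) * pp s m)" by (simp add: Fp algebra_simps)
          also have "\<dots> = - (k * ((monom 1 s - 1) * pp s m))" unfolding k by (simp add: ac_simps)
          also have "\<dots> = - (k * (monom 1 \<beta> - 1))" by (simp add: pp_tele bsm)
          finally show "(monom 1 \<beta> - 1) dvd (c * F - c' * F)" by simp
        qed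
        also have "\<dots> = c' * F" by (rule cyc_id[OF b0]) (simp add: Fp pp_coeff[OF s(1) hc'] bsm)
        finally have Mw: "M (snd w) = c' * pp s m" using c Fp by simp
        have "\<forall>j<\<beta>. tilde4 (coeff (snd w) j) = coeff c' (j mod s)"
          by (simp add: tilde_red coeff_M[symmetric] Mw pp_coeff[OF s(1) hc'] bsm)
        then show ?thesis by blast
      qed
      obtain c1 where c1: "\<forall>j<\<beta>. tilde4 (coeff (snd u) j) = coeff c1 (j mod s)" using per[OF uC] by blast
      obtain c2 where c2: "\<forall>j<\<beta>. tilde4 (coeff (snd v) j) = coeff c2 (j mod s)" using per[OF vC] by blast
      have ttper: "tt u v j = tt u v (j mod s)" if "j < \<beta>" for j
      proof -
        have "j mod s < \<beta>" using s(1) sle by (meson less_le_trans mod_less_divisor)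
        then show ?thesis using c1 c2 that by (simp add: tt_def)
      qed
      define r where "r = (\<Sum>i<s. monom (tt u v i) i)"
      have coeff_r: "coeff r i = (if i < s then tt u v i else 0)" for i
        by (simp add: r_def coeff_sum coeff_monom)
      have hr: "\<forall>i\<ge>s. coeff r i = 0" by (simp add: coeff_r)
      have TTr: "TT u v = r * pp s m"
      proof (rule poly_eqI)
        fix j
        show "coeff (TT u v) j = coeff (r * pp s m) j"
          using ttper[of j] s(1) by (simp add: pp_coeff[OF s(1) hr] coeff_TT coeff_r bsm)
      qed
      have E1: "fst (smul_R \<alpha> \<beta> ([:2:] * r) (cyc \<alpha> l, cyc \<beta> X)) = 0"
        by (simp add: smul_R_def M_mult M_2 M_smult2)
      have eq: "[:2:] * r * X = [:2:] * TT u v"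
        by (simp add: X_def fhp TTr numeral_poly algebra_simps four0)
      have "snd (smul_R \<alpha> \<beta> ([:2:] * r) (cyc \<alpha> l, cyc \<beta> X)) = cyc \<beta> (([:2:] * r) * cyc \<beta> X)"
        by (simp only: smul_R_def snd_conv)
      also have "\<dots> = cyc \<beta> ([:2:] * r * X)" by (rule cyc_mult[OF b0])
      also have "\<dots> = cyc \<beta> ([:2:] * TT u v)" by (simp only: eq)
      finally have E2: "snd (smul_R \<alpha> \<beta> ([:2:] * r) (cyc \<alpha> l, cyc \<beta> X)) = cyc \<beta> ([:2:] * TT u v)" .
      have "smul_R \<alpha> \<beta> ([:2:] * r) (cyc \<alpha> l, cyc \<beta> X) \<in> C"
        using Ccode SC by (auto simp: is_Z2Z4_cyclic_code_def S_def)
      moreover have "smul_R \<alpha> \<beta> ([:2:] * r) (cyc \<alpha> l, cyc \<beta> X) = (0, cyc \<beta> ([:2:] * TT u v))"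
        by (rule prod_eqI) (simp only: E1 E2 fst_conv snd_conv)+
      ultimately show ?thesis by simp
    qed
  qed
  have Cz: "(0,0) \<in> C" using Ccode by (simp add: is_Z2Z4_cyclic_code_def)
  have Cadd: "\<And>u v. u\<in>C \<Longrightarrow> v\<in>C \<Longrightarrow> radd \<alpha> \<beta> u v \<in> C"
    using Ccode by (simp add: is_Z2Z4_cyclic_code_def)
  have P0: "Phi \<alpha> \<beta> (0,0) = (\<lambda>_. 0)" by (auto simp: Phi_def redv fun_eq_iff)
  have Padd: "Phi \<alpha> \<beta> (radd \<alpha> \<beta> (radd \<alpha> \<beta> u v) (0, cyc \<beta> ([:2:] * TT u v)))
      = (\<lambda>i. Phi \<alpha> \<beta> u i + Phi \<alpha> \<beta> v i)" if uC: "u \<in> C" and vC: "v \<in> C" for u v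
  proof -
    obtain b1 a1 where u: "u = (b1, a1)" by force
    obtain b2 a2 where v: "v = (b2, a2)" by force
    have hu: "\<forall>i\<ge>\<alpha>. coeff b1 i = 0" "\<forall>i\<ge>\<beta>. coeff a1 i = 0"
      using R_high[of u \<alpha> \<beta>] uC CR u by auto
    have hv: "\<forall>i\<ge>\<alpha>. coeff b2 i = 0" "\<forall>i\<ge>\<beta>. coeff a2 i = 0"
      using R_high[of v \<alpha> \<beta>] vC CR v by auto
    have fstw: "fst (radd \<alpha> \<beta> (radd \<alpha> \<beta> u v) (0, cyc \<beta> ([:2:] * TT u v))) = b1 + b2"
      using hu hv by (simp add: radd_def u v cyc_cyc a0 cyc_id)
    have "snd (radd \<alpha> \<beta> (radd \<alpha> \<beta> u v) (0, cyc \<beta> ([:2:] * TT u v)))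
        = cyc \<beta> (a1 + a2 + [:2:] * TT u v)"
      by (simp add: radd_def u v cyc_add[OF b0])
    also have "\<dots> = a1 + a2 + [:2:] * TT u v"
      using hu hv by (intro cyc_id[OF b0]) (simp add: coeff_TT)
    finally have sndw: "snd (radd \<alpha> \<beta> (radd \<alpha> \<beta> u v) (0, cyc \<beta> ([:2:] * TT u v)))
        = a1 + a2 + [:2:] * TT u v" .
    show ?thesis
    proof (rule ext)
      fix i
      consider (A) "i < \<alpha>" | (B) "\<alpha> \<le> i" "i < \<alpha> + \<beta>" | (C) "\<alpha> + \<beta> \<le> i" "i < \<alpha> + 2 * \<beta>"
        | (D) "\<alpha> + 2 * \<beta> \<le> i" by linarith
      then show "Phi \<alpha> \<beta> (radd \<alpha> \<beta> (radd \<alpha> \<beta> u v) (0, cyc \<beta> ([:2:] * TT u v))) i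
          = Phi \<alpha> \<beta> u i + Phi \<alpha> \<beta> v i"
      proof cases
        case A then show ?thesis unfolding Phi_def fstw by (simp add: u v)
      next
        case B
        then have j: "i - \<alpha> < \<beta>" by linarith
        show ?thesis using B j gray(1)[of "coeff a1 (i - \<alpha>)" "coeff a2 (i - \<alpha>)"]
          unfolding Phi_def sndw by (simp add: u v coeff_TT tt_def)
      next
        case C
        define j where "j = i - \<alpha> - \<beta>"
        have j: "j < \<beta>" using C by (simp add: j_def)
        have e: "coeff (a1 + a2 + [:2:] * TT u v) j = coeff a1 j + coeff a2 j +
            2 * (if tilde4 (coeff a1 j) = 1 \<and> tilde4 (coeff a2 j) = 1 then 1 else 0)"
          using j by (simp add: coeff_TT tt_def u v)
        have "Phi \<alpha> \<beta> (radd \<alpha> \<beta> (radd \<alpha> \<beta> u v) (0, cyc \<beta> ([:2:] * TT u v))) i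
            = tilde4 (coeff (a1 + a2 + [:2:] * TT u v) j) + hat4 (coeff (a1 + a2 + [:2:] * TT u v) j)"
          unfolding Phi_def sndw using C by (simp add: j_def)
        also have "\<dots> = (tilde4 (coeff a1 j) + hat4 (coeff a1 j)) + (tilde4 (coeff a2 j) + hat4 (coeff a2 j))"
          unfolding e gray by (rule swap4)
        also have "\<dots> = Phi \<alpha> \<beta> u i + Phi \<alpha> \<beta> v i" using C by (simp add: Phi_def u v j_def)
        finally show ?thesis .
      next
        case D then show ?thesis by (simp add: Phi_def)
      qed
    qed
  qed
  have eqC: "gen_code \<alpha> \<beta> {(cyc \<alpha> b, 0), (cyc \<alpha> l, cyc \<beta> (f * h + 2 * f))} = C"
    by (simp add: C_def S_def X_def)
  show ?thesis
    unfolding eqC binary_linear_def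
  proof (intro conjI ballI)
    show "(\<lambda>_. 0) \<in> Phi \<alpha> \<beta> ` C"
    proof (rule image_eqI)
      show "(\<lambda>_. 0) = Phi \<alpha> \<beta> (0,0)" using P0 by simp
      show "(0,0) \<in> C" by (rule Cz)
    qed
  next
    fix x y assume "x \<in> Phi \<alpha> \<beta> ` C" "y \<in> Phi \<alpha> \<beta> ` C"
    then obtain u v where uv: "u \<in> C" "v \<in> C" "x = Phi \<alpha> \<beta> u" "y = Phi \<alpha> \<beta> v" by auto
    have "radd \<alpha> \<beta> (radd \<alpha> \<beta> u v) (0, cyc \<beta> ([:2:] * TT u v)) \<in> C"
      using Cadd key uv by blast
    then show "(\<lambda>i. x i + y i) \<in> Phi \<alpha> \<beta> ` C"
    proof (rule rev_image_eqI)
      show "(\<lambda>i. x i + y i) = Phi \<alpha> \<beta> (radd \<alpha> \<beta> (radd \<alpha> \<beta> u v) (0, cyc \<beta> ([:2:] * TT u v)))"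
        unfolding Padd[OF uv(1,2)] uv(3,4) ..
    qed
  qed
qed
end
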